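(* Let $\epsilon>0$ and suppose $g\in\mathrm{SO}^0(2,1)$ is $\epsilon$-hyperbolic. Then for all $\delta>0$, $$B\!\left(0,\frac{\delta\epsilon}{4}\right)\cap E^{wu}(g)\subset g\,B(0,\delta).$$
   Context: $\mathbb{R}^{2,1}$ is $\mathbb{R}^3$ with $\mathbb{B}(u,v)=u_1v_1+u_2v_2-u_3v_3$; $\mathrm{SO}^0(2,1)$ is the identity component of its linear isometry group. $\rho$ is Euclidean distance and $B(x,\delta)$ the open Euclidean ball. Let $S^1=\{(\cos\phi,\sin\phi,1)\}$. An element $g\in\mathrm{SO}^0(2,1)$ is hyperbolic if it has real distinct eigenvalues; these are $\lambda<1<\lambda^{-1}$. Let $x^-(g)$ (resp. $x^+(g)$) be the eigenvector for $\lambda$ (resp. $\lambda^{-1}$) lying on $S^1$, and $x^0(g)$ the eigenvector for eigenvalue $1$ with $\mathbb{B}(x^0(g),x^0(g))=1$ such that $(x^-(g),x^+(g),x^0(g))$ is a positively oriented basis. For a unit-spacelike $v$, $x^\pm(v)$ are the two points of $S^1\cap v^\perp$ labelled so that $(x^-(v),x^+(v),v)$ is positively oriented (so $x^\pm(x^0(g))=x^\pm(g)$). $v$ is $\epsilon$-spacelike if $\rho(x^+(v),x^-(v))\ge\epsilon$; hyperbolic $g$ is $\epsilon$-hyperbolic if $x^0(g)$ is $\epsilon$-spacelike. $E^{wu}(g)$ is the linear plane spanned by $x^0(g)$ and $x^+(g)$. *)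

theory Defs
  imports "HOL-Analysis.Analysis"
begin

definition mink :: "real^3 \<Rightarrow> real^3 \<Rightarrow> real" where
  "mink u v = u$1 * v$1 + u$2 * v$2 - u$3 * v$3"

text \<open>SO^0(2,1): linear isometries of mink with determinant 1 preserving time orientation
  (identity component).\<close>
definition SO0_21 :: "(real^3^3) set" where
  "SO0_21 = {g. (\<forall>u v. mink (g *v u) (g *v v) = mink u v) \<and> det g = 1 \<and> g$3$3 > 0}"

definition S1 :: "(real^3) set" where
  "S1 = {x. x$3 = 1 \<and> (x$1)^2 + (x$2)^2 = 1}"

definition is_eigenvalue :: "real^3^3 \<Rightarrow> real \<Rightarrow> bool" where
  "is_eigenvalue g l \<longleftrightarrow> (\<exists>v. v \<noteq> 0 \<and> g *v v = l *\<^sub>R v)"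

definition hyperbolic :: "real^3^3 \<Rightarrow> bool" where
  "hyperbolic g \<longleftrightarrow> g \<in> SO0_21 \<and> (\<exists>l1 l2 l3. l1 \<noteq> l2 \<and> l1 \<noteq> l3 \<and> l2 \<noteq> l3
      \<and> is_eigenvalue g l1 \<and> is_eigenvalue g l2 \<and> is_eigenvalue g l3)"

definition pos_oriented :: "real^3 \<Rightarrow> real^3 \<Rightarrow> real^3 \<Rightarrow> bool" where
  "pos_oriented a b c \<longleftrightarrow> det (vector [a, b, c] :: real^3^3) > 0"

definition xminus :: "real^3^3 \<Rightarrow> real^3" where
  "xminus g = (THE x. x \<in> S1 \<and> (\<exists>l. l < 1 \<and> g *v x = l *\<^sub>R x))"

definition xplus :: "real^3^3 \<Rightarrow> real^3" where
  "xplus g = (THE x. x \<in> S1 \<and> (\<exists>l. l > 1 \<and> g *v x = l *\<^sub>R x))"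

definition xzero :: "real^3^3 \<Rightarrow> real^3" where
  "xzero g = (THE x. g *v x = x \<and> mink x x = 1 \<and> pos_oriented (xminus g) (xplus g) x)"

text \<open>For unit spacelike v, the two points of S1 \<inter> v^\<perp>, labelled so that
  (x^-(v), x^+(v), v) is positively oriented.\<close>
definition vminus :: "real^3 \<Rightarrow> real^3" where
  "vminus v = (THE x. x \<in> S1 \<and> mink x v = 0 \<and>
      (\<exists>y. y \<in> S1 \<and> mink y v = 0 \<and> pos_oriented x y v))"

definition vplus :: "real^3 \<Rightarrow> real^3" where
  "vplus v = (THE y. y \<in> S1 \<and> mink y v = 0 \<and> pos_oriented (vminus v) y v)"

definition eps_spacelike :: "real \<Rightarrow> real^3 \<Rightarrow> bool" where
  "eps_spacelike \<epsilon> v \<longleftrightarrow> dist (vplus v) (vminus v) \<ge> \<epsilon>"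

definition eps_hyperbolic :: "real \<Rightarrow> real^3^3 \<Rightarrow> bool" where
  "eps_hyperbolic \<epsilon> g \<longleftrightarrow> hyperbolic g \<and> eps_spacelike \<epsilon> (xzero g)"

definition Ewu :: "real^3^3 \<Rightarrow> (real^3) set" where
  "Ewu g = span {xzero g, xplus g}"

end

theory Submission
  imports Defs
begin


definition D3 :: "real^3 \<Rightarrow> real^3 \<Rightarrow> real^3 \<Rightarrow> real" where
  "D3 a b c = det (vector [a, b, c] :: real^3^3)"

lemma D3_formula: "D3 a b c = a$1*b$2*c$3 + a$2*b$3*c$1 + a$3*b$1*c$2 - a$1*b$3*c$2 - a$2*b$1*c$3 - a$3*b$2*c$1"
  unfolding D3_def by (simp add: det_3)

lemma cramer: "D3 a b c *\<^sub>R z = D3 z b c *\<^sub>R a + D3 a z c *\<^sub>R b + D3 a b z *\<^sub>R c"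
  unfolding D3_formula by (simp add: vec_eq_iff forall_3 algebra_simps)

lemma vec3_eqI: "(x::real^3)$1 = y$1 \<Longrightarrow> x$2 = y$2 \<Longrightarrow> x$3 = y$3 \<Longrightarrow> x = y"
  by (simp add: vec_eq_iff forall_3)

lemma vec3_eq_iff: "(x::real^3) = y \<longleftrightarrow> x$1 = y$1 \<and> x$2 = y$2 \<and> x$3 = y$3"
  by (simp add: vec_eq_iff forall_3)

lemma span2: "y \<in> span {u, v} \<Longrightarrow> \<exists>a b. y = a *\<^sub>R u + b *\<^sub>R v"
  by (auto simp: span_insert span_singleton) (metis add.commute diff_add_cancel)

lemma D3_indep:
  assumes "D3 a b c \<noteq> 0" "\<alpha> *\<^sub>R a + \<beta> *\<^sub>R b + \<gamma> *\<^sub>R c = 0"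
  shows "\<alpha> = 0 \<and> \<beta> = 0 \<and> \<gamma> = 0"
proof -
  have "D3 (\<alpha> *\<^sub>R a + \<beta> *\<^sub>R b + \<gamma> *\<^sub>R c) b c = \<alpha> * D3 a b c"
    "D3 a (\<alpha> *\<^sub>R a + \<beta> *\<^sub>R b + \<gamma> *\<^sub>R c) c = \<beta> * D3 a b c"
    "D3 a b (\<alpha> *\<^sub>R a + \<beta> *\<^sub>R b + \<gamma> *\<^sub>R c) = \<gamma> * D3 a b c"
    by (simp_all add: D3_formula algebra_simps)
  then show ?thesis using assms by (simp add: D3_formula)
qed

lemma D3_dep:
  assumes "D3 a b c = 0"
  shows "\<exists>\<alpha> \<beta> \<gamma>. (\<alpha> \<noteq> 0 \<or> \<beta> \<noteq> 0 \<or> \<gamma> \<noteq> 0) \<and> \<alpha> *\<^sub>R a + \<beta> *\<^sub>R b + \<gamma> *\<^sub>R c = 0"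
proof -
  let ?M = "transpose (vector [a, b, c] :: real^3^3)"
  have "det ?M = 0" using assms by (simp add: D3_def)
  hence "\<not> invertible ?M" using invertible_det_nz by blast
  hence "\<not> (\<exists>B. B ** ?M = mat 1)" using invertible_left_inverse by blast
  then obtain x where x: "?M *v x = 0" "x \<noteq> 0" using matrix_left_invertible_ker by blast
  have "?M *v x = x$1 *\<^sub>R a + x$2 *\<^sub>R b + x$3 *\<^sub>R c"
    by (simp add: vec_eq_iff forall_3 matrix_vector_mult_def transpose_def sum_3 algebra_simps)
  with x show ?thesis by (metis vec3_eqI zero_index)
qed

lemma eig_comb:
  fixes g :: "real^3^3"
  assumes "g *v v1 = l1 *\<^sub>R v1" "g *v v2 = l2 *\<^sub>R v2" "g *v v3 = l3 *\<^sub>R v3"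
  shows "g *v (a *\<^sub>R v1 + b *\<^sub>R v2 + c *\<^sub>R v3) = (a*l1) *\<^sub>R v1 + (b*l2) *\<^sub>R v2 + (c*l3) *\<^sub>R v3"
  using assms by (simp add: algebra_simps)

lemma coeff_zero:
  fixes g :: "real^3^3"
  assumes "g *v v1 = l1 *\<^sub>R v1" "g *v v2 = l2 *\<^sub>R v2" "g *v v3 = l3 *\<^sub>R v3"
    and "l1 \<noteq> l2" "l1 \<noteq> l3" "v1 \<noteq> 0"
    and s: "a *\<^sub>R v1 + b *\<^sub>R v2 + c *\<^sub>R v3 = 0"
  shows "a = 0"
proof -
  have s1: "(a*l1) *\<^sub>R v1 + (b*l2) *\<^sub>R v2 + (c*l3) *\<^sub>R v3 = 0"
    using eig_comb[OF assms(1-3), of a b c] s by simp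
  have s2: "(a*l1*l1) *\<^sub>R v1 + (b*l2*l2) *\<^sub>R v2 + (c*l3*l3) *\<^sub>R v3 = 0"
    using eig_comb[OF assms(1-3), of "a*l1" "b*l2" "c*l3"] s1 by simp
  have "(a*(l1-l2)*(l1-l3)) *\<^sub>R v1 = ((a*l1*l1) *\<^sub>R v1 + (b*l2*l2) *\<^sub>R v2 + (c*l3*l3) *\<^sub>R v3)
     - (l2+l3) *\<^sub>R ((a*l1) *\<^sub>R v1 + (b*l2) *\<^sub>R v2 + (c*l3) *\<^sub>R v3) + (l2*l3) *\<^sub>R (a *\<^sub>R v1 + b *\<^sub>R v2 + c *\<^sub>R v3)"
    by (simp add: vec3_eq_iff algebra_simps)
  also have "\<dots> = 0" using s s1 s2 by simp
  finally show ?thesis using assms(4,5,6) by simp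
qed

lemma eig3_D3:
  fixes g :: "real^3^3"
  assumes e: "g *v v1 = l1 *\<^sub>R v1" "g *v v2 = l2 *\<^sub>R v2" "g *v v3 = l3 *\<^sub>R v3"
    and d: "l1 \<noteq> l2" "l1 \<noteq> l3" "l2 \<noteq> l3" and nz: "v1 \<noteq> 0" "v2 \<noteq> 0" "v3 \<noteq> 0"
  shows "D3 v1 v2 v3 \<noteq> 0"
proof
  assume "D3 v1 v2 v3 = 0"
  then obtain a b c where abc: "a \<noteq> 0 \<or> b \<noteq> 0 \<or> c \<noteq> 0" "a *\<^sub>R v1 + b *\<^sub>R v2 + c *\<^sub>R v3 = 0"
    using D3_dep by blast
  have "a = 0" using coeff_zero[OF e d(1,2) nz(1) abc(2)] .
  moreover have "b = 0" using coeff_zero[OF e(2,1,3), of b a c] d nz abc(2) by (simp add: add_ac)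
  moreover have "c = 0" using coeff_zero[OF e(3,1,2), of c a b] d nz abc(2) by (simp add: add_ac)
  ultimately show False using abc(1) by simp
qed

lemma eig_class:
  fixes g :: "real^3^3"
  assumes e: "g *v v1 = l1 *\<^sub>R v1" "g *v v2 = l2 *\<^sub>R v2" "g *v v3 = l3 *\<^sub>R v3"
    and d: "l1 \<noteq> l2" "l1 \<noteq> l3" "l2 \<noteq> l3" and nz: "v1 \<noteq> 0" "v2 \<noteq> 0" "v3 \<noteq> 0"
    and z: "z \<noteq> 0" "g *v z = m *\<^sub>R z"
  shows "(m = l1 \<and> (\<exists>c. z = c *\<^sub>R v1)) \<or> (m = l2 \<and> (\<exists>c. z = c *\<^sub>R v2)) \<or> (m = l3 \<and> (\<exists>c. z = c *\<^sub>R v3))"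
proof -
  let ?D = "D3 v1 v2 v3"
  have D: "?D \<noteq> 0" using eig3_D3[OF e d nz] .
  define a where "a = D3 z v2 v3 / ?D"
  define b where "b = D3 v1 z v3 / ?D"
  define c where "c = D3 v1 v2 z / ?D"
  have zz: "z = a *\<^sub>R v1 + b *\<^sub>R v2 + c *\<^sub>R v3"
  proof -
    have "z = (1/?D) *\<^sub>R (?D *\<^sub>R z)" using D by simp
    also have "\<dots> = a *\<^sub>R v1 + b *\<^sub>R v2 + c *\<^sub>R v3"
      unfolding cramer[of v1 v2 v3 z] a_def b_def c_def by (simp add: scaleR_add_right)
    finally show ?thesis .
  qed
  have "(a*(l1-m)) *\<^sub>R v1 + (b*(l2-m)) *\<^sub>R v2 + (c*(l3-m)) *\<^sub>R v3 = g *v z - m *\<^sub>R z"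
  proof -
    have "g *v z = (a*l1) *\<^sub>R v1 + (b*l2) *\<^sub>R v2 + (c*l3) *\<^sub>R v3"
      using eig_comb[OF e, of a b c] zz by simp
    moreover have "m *\<^sub>R z = (a*m) *\<^sub>R v1 + (b*m) *\<^sub>R v2 + (c*m) *\<^sub>R v3"
      by (subst zz) (simp add: algebra_simps)
    ultimately show ?thesis by (simp add: vec3_eq_iff algebra_simps)
  qed
  also have "\<dots> = 0" using z by simp
  finally have "a*(l1-m) = 0 \<and> b*(l2-m) = 0 \<and> c*(l3-m) = 0" using D3_indep[OF D] by blast
  moreover have "a \<noteq> 0 \<or> b \<noteq> 0 \<or> c \<noteq> 0" using z zz by auto
  ultimately consider "a \<noteq> 0" | "b \<noteq> 0" | "c \<noteq> 0" by blast
  then show ?thesis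
  proof cases
    case 1
    hence "m = l1" using \<open>a*(l1-m) = 0 \<and> b*(l2-m) = 0 \<and> c*(l3-m) = 0\<close> by simp
    hence "b = 0" "c = 0" using d \<open>a*(l1-m) = 0 \<and> b*(l2-m) = 0 \<and> c*(l3-m) = 0\<close> by auto
    then show ?thesis using zz \<open>m = l1\<close> by auto
  next
    case 2
    hence "m = l2" using \<open>a*(l1-m) = 0 \<and> b*(l2-m) = 0 \<and> c*(l3-m) = 0\<close> by simp
    hence "a = 0" "c = 0" using d \<open>a*(l1-m) = 0 \<and> b*(l2-m) = 0 \<and> c*(l3-m) = 0\<close> by auto
    then show ?thesis using zz \<open>m = l2\<close> by auto
  next
    case 3
    hence "m = l3" using \<open>a*(l1-m) = 0 \<and> b*(l2-m) = 0 \<and> c*(l3-m) = 0\<close> by simp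
    hence "a = 0" "b = 0" using d \<open>a*(l1-m) = 0 \<and> b*(l2-m) = 0 \<and> c*(l3-m) = 0\<close> by auto
    then show ?thesis using zz \<open>m = l3\<close> by auto
  qed
qed

lemma mink_pres: "g \<in> SO0_21 \<Longrightarrow> mink (g *v u) (g *v v) = mink u v"
  by (simp add: SO0_21_def)

lemma eig_orth:
  assumes "g \<in> SO0_21" "g *v u = a *\<^sub>R u" "g *v v = b *\<^sub>R v" "a * b \<noteq> 1"
  shows "mink u v = 0"
proof -
  have "mink u v = mink (a *\<^sub>R u) (b *\<^sub>R v)" using mink_pres[OF assms(1), of u v] assms(2,3) by simp
  also have "\<dots> = a * b * mink u v" by (simp add: mink_def algebra_simps)
  finally have "(1 - a*b) * mink u v = 0" by (simp add: algebra_simps)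
  thus ?thesis using assms(4) by simp
qed

lemma mink_lin3: "mink u (a *\<^sub>R x + b *\<^sub>R y + c *\<^sub>R z) = a * mink u x + b * mink u y + c * mink u z"
  by (simp add: mink_def algebra_simps)

lemma mink_scale2: "mink u (a *\<^sub>R x) = a * mink u x"
  by (simp add: mink_def algebra_simps)

lemma mink_sym: "mink u v = mink v u"
  by (simp add: mink_def algebra_simps)

lemma pairing:
  fixes g :: "real^3^3"
  assumes G: "g \<in> SO0_21"
    and e: "g *v v1 = l1 *\<^sub>R v1" "g *v v2 = l2 *\<^sub>R v2" "g *v v3 = l3 *\<^sub>R v3"
    and D: "D3 v1 v2 v3 \<noteq> 0" and nz: "v1 \<noteq> 0"
  shows "l1*l1 = 1 \<or> l1*l2 = 1 \<or> l1*l3 = 1"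
proof (rule ccontr)
  assume "\<not> ?thesis"
  hence o: "mink v1 v1 = 0" "mink v1 v2 = 0" "mink v1 v3 = 0"
    using eig_orth[OF G] e by blast+
  define w :: "real^3" where "w = vector [v1$1, v1$2, - v1$3]"
  let ?D = "D3 v1 v2 v3"
  have "?D *\<^sub>R w = D3 w v2 v3 *\<^sub>R v1 + D3 v1 w v3 *\<^sub>R v2 + D3 v1 v2 w *\<^sub>R v3" by (rule cramer)
  hence "mink v1 (?D *\<^sub>R w) = D3 w v2 v3 * mink v1 v1 + D3 v1 w v3 * mink v1 v2 + D3 v1 v2 w * mink v1 v3"
    by (simp only: mink_lin3)
  hence "?D * mink v1 w = 0" using o by (simp add: mink_scale2)
  hence "mink v1 w = 0" using D by simp
  hence "v1$1^2 + v1$2^2 + v1$3^2 = 0" by (simp add: w_def mink_def power2_eq_square)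
  hence "v1$1 = 0 \<and> v1$2 = 0 \<and> v1$3 = 0" by (simp add: add_nonneg_eq_0_iff)
  hence "v1 = 0" by (simp add: vec3_eq_iff)
  thus False using nz by simp
qed

lemma eig_row:
  fixes g :: "real^3^3"
  assumes e: "g *v v1 = l1 *\<^sub>R v1"
  shows "g$i$1 * v1$1 + g$i$2 * v1$2 + g$i$3 * v1$3 = v1$i * l1"
proof -
  have "(g *v v1)$i = g$i$1 * v1$1 + g$i$2 * v1$2 + g$i$3 * v1$3"
    by (simp add: matrix_vector_mult_def sum_3)
  moreover have "(g *v v1)$i = v1$i * l1" using e by simp
  ultimately show ?thesis by simp
qed

lemma det_eig:
  fixes g :: "real^3^3"
  assumes e: "g *v v1 = l1 *\<^sub>R v1" "g *v v2 = l2 *\<^sub>R v2" "g *v v3 = l3 *\<^sub>R v3"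
    and D: "D3 v1 v2 v3 \<noteq> 0"
  shows "det g = l1 * l2 * l3"
proof -
  let ?V = "transpose (vector [v1, v2, v3] :: real^3^3)"
  let ?L = "vector [vector [l1, 0, 0], vector [0, l2, 0], vector [0, 0, l3]] :: real^3^3"
  note c' = eig_row[OF e(1)] eig_row[OF e(2)] eig_row[OF e(3)]
  have "g ** ?V = ?V ** ?L"
    unfolding vec_eq_iff matrix_matrix_mult_def transpose_def
    by (simp add: sum_3 forall_3 c')
  hence "det (g ** ?V) = det (?V ** ?L)" by (rule arg_cong)
  hence "det g * det ?V = det ?V * det ?L" by (simp only: det_mul)
  moreover have "det ?V = D3 v1 v2 v3" by (simp add: D3_def)
  moreover have "det ?L = l1 * l2 * l3" by (simp add: det_3)
  ultimately show ?thesis using D by simp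
qed


lemma comb3:
  fixes l1 l2 l3 :: real
  assumes d: "l1 \<noteq> l2" "l1 \<noteq> l3" "l2 \<noteq> l3" and p: "l1*l2*l3 = 1"
    and p1: "l1*l1 = 1 \<or> l1*l2 = 1 \<or> l1*l3 = 1"
    and p2: "l2*l1 = 1 \<or> l2*l2 = 1 \<or> l2*l3 = 1"
    and p3: "l3*l1 = 1 \<or> l3*l2 = 1 \<or> l3*l3 = 1"
  shows "(l1 = 1 \<and> l2*l3 = 1) \<or> (l2 = 1 \<and> l1*l3 = 1) \<or> (l3 = 1 \<and> l1*l2 = 1)"
proof -
  have sq: "\<And>x::real. x*x = 1 \<Longrightarrow> x = 1 \<or> x = -1"
    by (metis minus_equation_iff mult_cancel_left1 square_eq_iff)
  consider "l1*l2 = 1" | "l1*l3 = 1" | "l1*l1 = 1" "l1*l2 \<noteq> 1" "l1*l3 \<noteq> 1" using p1 by blast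
  then show ?thesis
  proof cases
    case 1
    hence "l3 = 1" using p by simp
    with 1 show ?thesis by simp
  next
    case 2
    have "l2 * (l1*l3) = 1" using p by (simp add: algebra_simps)
    hence "l2 = 1" using 2 by simp
    with 2 show ?thesis by simp
  next
    case 3
    from sq[OF 3(1)] show ?thesis
    proof
      assume "l1 = 1" thus ?thesis using p by simp
    next
      assume m: "l1 = -1"
      hence l23: "l2*l3 = -1" using p by simp
      from p2 show ?thesis
      proof (elim disjE)
        assume "l2*l1 = 1" thus ?thesis using 3 by (simp add: mult.commute)
      next
        assume "l2*l2 = 1"
        hence "l2 = 1" using sq d m by blast
        hence "l3 = -1" using l23 by simp
        thus ?thesis using m d by simp
      next
        assume "l2*l3 = 1" thus ?thesis using l23 by simp
      qed
    qed
  qed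
qed


lemma cs2: "((a::real)*x+b*y)^2 \<le> (a^2+b^2)*(x^2+y^2)"
proof -
  have "(a^2+b^2)*(x^2+y^2) - (a*x+b*y)^2 = (a*y - b*x)^2" by (simp add: power2_eq_square algebra_simps)
  moreover have "0 \<le> (a*y - b*x)^2" by simp
  ultimately show ?thesis by linarith
qed

lemma S1_pos:
  fixes g :: "real^3^3"
  assumes G: "g \<in> SO0_21" and z: "z \<in> S1" and e: "g *v z = c *\<^sub>R z"
  shows "c > 0"
proof -
  define e3 :: "real^3" where "e3 = vector [0, 0, 1]"
  define w where "w = g *v e3"
  have w3: "w$3 = g$3$3" by (simp add: w_def e3_def matrix_vector_mult_def sum_3)
  have g33: "g$3$3 > 0" using G by (simp add: SO0_21_def)
  have "mink w w = mink e3 e3" unfolding w_def by (rule mink_pres[OF G])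
  hence ww: "w$1^2 + w$2^2 = w$3^2 - 1" by (simp add: mink_def e3_def power2_eq_square)
  have "mink (g *v z) w = mink z e3" unfolding w_def by (rule mink_pres[OF G])
  hence "c * mink z w = -1" using z e by (simp add: mink_def e3_def S1_def algebra_simps)
  moreover have "mink z w < 0"
  proof -
    have zz: "z$1^2 + z$2^2 = 1" "z$3 = 1" using z by (auto simp: S1_def)
    have cs: "(z$1*w$1 + z$2*w$2)^2 \<le> (z$1^2 + z$2^2) * (w$1^2 + w$2^2)"
      by (rule cs2)
    hence "(z$1*w$1 + z$2*w$2)^2 < (w$3)^2" using zz ww by simp
    hence "z$1*w$1 + z$2*w$2 < w$3"
    proof (rule contrapos_pp)
      assume "\<not> z$1*w$1 + z$2*w$2 < w$3"
      hence "w$3 \<le> z$1*w$1 + z$2*w$2" by simp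
      hence "(w$3)^2 \<le> (z$1*w$1 + z$2*w$2)^2" by (rule power_mono) (use w3 g33 in simp)
      thus "\<not> (z$1*w$1 + z$2*w$2)^2 < (w$3)^2" by simp
    qed
    thus ?thesis using zz by (simp add: mink_def)
  qed
  ultimately show ?thesis
  proof (cases "c \<le> 0")
    case True
    assume "c * mink z w = -1" "mink z w < 0"
    hence "0 \<le> c * mink z w" using True by (intro mult_nonpos_nonpos) auto
    thus ?thesis using \<open>c * mink z w = -1\<close> by simp
  qed simp
qed


lemma null_S1:
  fixes a :: "real^3"
  assumes "mink a a = 0" "a \<noteq> 0"
  shows "a$3 \<noteq> 0 \<and> (1/a$3) *\<^sub>R a \<in> S1"
proof -
  have aa: "a$1^2 + a$2^2 = a$3^2" using assms(1) by (simp add: mink_def power2_eq_square)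
  have a3: "a$3 \<noteq> 0"
  proof
    assume h: "a$3 = 0"
    hence "a$1^2 + a$2^2 = 0" using aa by simp
    hence "a$1 = 0" "a$2 = 0" by (simp_all add: sum_power2_eq_zero_iff)
    hence "a = 0" using h by (simp add: vec3_eq_iff)
    thus False using assms(2) by simp
  qed
  have "(a$1/a$3)^2 + (a$2/a$3)^2 = 1"
    using aa a3 by (simp add: power_divide add_divide_distrib[symmetric])
  thus ?thesis using a3 by (simp add: S1_def)
qed

lemma from_pair:
  fixes g :: "real^3^3"
  assumes G: "g \<in> SO0_21" and u: "g *v u = u" "u \<noteq> 0"
    and a: "g *v a = la *\<^sub>R a" "a \<noteq> 0" and b: "g *v b = lb *\<^sub>R b" "b \<noteq> 0"
    and l: "la * lb = 1" "la \<noteq> lb"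
  shows "\<exists>lam p q u. 0 < lam \<and> lam < 1 \<and> p \<in> S1 \<and> q \<in> S1 \<and> g *v p = lam *\<^sub>R p
     \<and> g *v q = (1/lam) *\<^sub>R q \<and> g *v u = u \<and> u \<noteq> 0"
proof -
  have laa: "la * la \<noteq> 1"
  proof
    assume "la * la = 1"
    hence e: "la * la = la * lb" using l by simp
    have "la \<noteq> 0" using l(1) by auto
    with e have "la = lb" by simp
    thus False using l by simp
  qed
  have lbb: "lb * lb \<noteq> 1"
  proof
    assume "lb * lb = 1"
    hence e: "lb * lb = la * lb" using l by simp
    have "lb \<noteq> 0" using l(1) by auto
    with e have "la = lb" by simp
    thus False using l by simp
  qed
  have "mink a a = 0" using eig_orth[OF G a(1) a(1) laa] .
  then obtain p0 where p0: "p0 \<in> S1" "g *v p0 = la *\<^sub>R p0"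
    using null_S1[OF _ a(2)] a(1) by (metis matrix_vector_mult_scaleR scaleR_left_commute)
  have "mink b b = 0" using eig_orth[OF G b(1) b(1) lbb] .
  then obtain q0 where q0: "q0 \<in> S1" "g *v q0 = lb *\<^sub>R q0"
    using null_S1[OF _ b(2)] b(1) by (metis matrix_vector_mult_scaleR scaleR_left_commute)
  have pa: "la > 0" using S1_pos[OF G p0] .
  have pb: "lb > 0" using S1_pos[OF G q0] .
  have lb': "lb = 1/la" using l(1) pa by (simp add: field_simps)
  show ?thesis
  proof (cases "la < 1")
    case True
    thus ?thesis using pa p0 q0 u lb' by blast
  next
    case False
    hence "la > 1" using l laa by (cases "la = 1") auto
    hence "lb < 1" using lb' by simp
    moreover have "la = 1/lb" using lb' by simp
    ultimately show ?thesis using pb p0 q0 u by blast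
  qed
qed


lemma hyp_structure:
  fixes g :: "real^3^3"
  assumes H: "hyperbolic g"
  shows "\<exists>lam p q u. 0 < lam \<and> lam < 1 \<and> p \<in> S1 \<and> q \<in> S1 \<and> g *v p = lam *\<^sub>R p
     \<and> g *v q = (1/lam) *\<^sub>R q \<and> g *v u = u \<and> u \<noteq> 0"
proof -
  have G: "g \<in> SO0_21" using H by (simp add: hyperbolic_def)
  obtain l1 l2 l3 where d: "l1 \<noteq> l2" "l1 \<noteq> l3" "l2 \<noteq> l3" and
    ev: "is_eigenvalue g l1" "is_eigenvalue g l2" "is_eigenvalue g l3"
    using H unfolding hyperbolic_def by blast
  obtain v1 where v1: "v1 \<noteq> 0" "g *v v1 = l1 *\<^sub>R v1" using ev(1) by (auto simp: is_eigenvalue_def)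
  obtain v2 where v2: "v2 \<noteq> 0" "g *v v2 = l2 *\<^sub>R v2" using ev(2) by (auto simp: is_eigenvalue_def)
  obtain v3 where v3: "v3 \<noteq> 0" "g *v v3 = l3 *\<^sub>R v3" using ev(3) by (auto simp: is_eigenvalue_def)
  have D123: "D3 v1 v2 v3 \<noteq> 0" using eig3_D3[OF v1(2) v2(2) v3(2) d v1(1) v2(1) v3(1)] .
  have D213: "D3 v2 v1 v3 \<noteq> 0" using eig3_D3[OF v2(2) v1(2) v3(2)] d v1(1) v2(1) v3(1) by auto
  have D312: "D3 v3 v1 v2 \<noteq> 0" using eig3_D3[OF v3(2) v1(2) v2(2)] d v1(1) v2(1) v3(1) by auto
  have "det g = l1 * l2 * l3" using det_eig[OF v1(2) v2(2) v3(2) D123] .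
  hence p: "l1 * l2 * l3 = 1" using G by (simp add: SO0_21_def)
  have p1: "l1*l1 = 1 \<or> l1*l2 = 1 \<or> l1*l3 = 1" using pairing[OF G v1(2) v2(2) v3(2) D123 v1(1)] .
  have p2: "l2*l2 = 1 \<or> l2*l1 = 1 \<or> l2*l3 = 1" using pairing[OF G v2(2) v1(2) v3(2) D213 v2(1)] .
  have p3: "l3*l3 = 1 \<or> l3*l1 = 1 \<or> l3*l2 = 1" using pairing[OF G v3(2) v1(2) v2(2) D312 v3(1)] .
  have "(l1 = 1 \<and> l2*l3 = 1) \<or> (l2 = 1 \<and> l1*l3 = 1) \<or> (l3 = 1 \<and> l1*l2 = 1)"
    using comb3[OF d p p1] p2 p3 by blast
  thus ?thesis
  proof (elim disjE conjE)
    assume "l1 = 1" "l2*l3 = 1"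
    thus ?thesis using from_pair[OF G _ v1(1) v2(2) v2(1) v3(2) v3(1)] v1(2) d by simp
  next
    assume "l2 = 1" "l1*l3 = 1"
    thus ?thesis using from_pair[OF G _ v2(1) v1(2) v1(1) v3(2) v3(1)] v2(2) d by simp
  next
    assume "l3 = 1" "l1*l2 = 1"
    thus ?thesis using from_pair[OF G _ v3(1) v1(2) v1(1) v2(2) v2(1)] v3(2) d by simp
  qed
qed



lemma chord_ineq:
  fixes X1 X2 X3 p1 p2 q1 q2 :: real
  assumes "X1^2 + X2^2 = 1 + X3^2" "X1*p1 + X2*p2 = X3" "X1*q1 + X2*q2 = X3"
    "p1^2 + p2^2 = 1" "q1^2 + q2^2 = 1"
  shows "((q1-p1)^2 + (q2-p2)^2) * (1 + X3^2) \<le> 4"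
proof -
  define Cp where "Cp = X1*p2 - X2*p1"
  define Cq where "Cq = X1*q2 - X2*q1"
  have l1: "(X1^2+X2^2)*(p1^2+p2^2) = (X1*p1+X2*p2)^2 + Cp^2"
    unfolding Cp_def by (simp add: power2_eq_square algebra_simps)
  have l2: "(X1^2+X2^2)*(q1^2+q2^2) = (X1*q1+X2*q2)^2 + Cq^2"
    unfolding Cq_def by (simp add: power2_eq_square algebra_simps)
  have l3: "(X1^2+X2^2)*((q1-p1)^2 + (q2-p2)^2) = (X1*(q1-p1)+X2*(q2-p2))^2 + (Cq - Cp)^2"
    unfolding Cp_def Cq_def by (simp add: power2_eq_square algebra_simps)
  have cp: "Cp^2 = 1" using l1 assms by simp
  have cq: "Cq^2 = 1" using l2 assms by simp
  have z: "X1*(q1-p1)+X2*(q2-p2) = 0" using assms(2,3) by (simp add: algebra_simps)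
  have "(Cq - Cp)^2 \<le> 2*Cq^2 + 2*Cp^2"
  proof -
    have "2*Cq^2 + 2*Cp^2 - (Cq - Cp)^2 = (Cq + Cp)^2" by (simp add: power2_eq_square algebra_simps)
    moreover have "0 \<le> (Cq + Cp)^2" by simp
    ultimately show ?thesis by linarith
  qed
  hence "(Cq - Cp)^2 \<le> 4" using cp cq by simp
  thus ?thesis using l3 z assms(1) by (simp add: mult.commute)
qed

lemma final_ineq:
  fixes a b lam X3 eps rho delta :: real
  assumes lam: "0 < lam" "lam < 1" and e: "0 < eps" "eps \<le> rho" and d: "0 < delta"
    and ch: "rho^2 * (1 + X3^2) \<le> 4"
    and Y: "a^2 + 2*(a*X3+b)^2 < (delta*eps/4)^2"
  shows "a^2 + 2*(a*X3 + lam*b)^2 < delta^2"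
proof -
  define Y where "Y = a^2 + 2*(a*X3+b)^2"
  have h1: "Y < delta^2 * eps^2 / 16" using Y unfolding Y_def by (simp add: power_mult_distrib power_divide)
  have "eps^2 \<le> rho^2" using e by (intro power_mono) auto
  hence "eps^2 * (1 + X3^2) \<le> rho^2 * (1 + X3^2)" by (intro mult_right_mono) (auto intro: add_nonneg_nonneg)
  hence h2: "eps^2 * (1 + X3^2) \<le> 4" using ch by linarith
  have "0 \<le> X3^2 * eps^2" by simp
  moreover have "eps^2 * (1 + X3^2) = eps^2 + X3^2 * eps^2" by (simp add: algebra_simps)
  ultimately have h3: "eps^2 \<le> 4" using h2 by linarith
  have "delta^2 * eps^2 / 16 \<le> delta^2 / 4" using h3 d by (simp add: field_simps)
  moreover have "delta^2 / 4 < delta^2" using d by simp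
  ultimately have h4: "Y < delta^2" using h1 by linarith
  have h5: "a^2 \<le> Y" unfolding Y_def by simp
  have "a^2*(1+2*X3^2)*eps^2 \<le> 2 * a^2 * (eps^2*(1+X3^2))" by (simp add: algebra_simps)
  also have "\<dots> \<le> 2 * a^2 * 4" using h2 by (intro mult_left_mono) auto
  also have "\<dots> \<le> 8 * Y" using h5 by simp
  also have "\<dots> < delta^2 * eps^2 / 2" using h1 by simp
  finally have "a^2*(1+2*X3^2)*eps^2 < (delta^2/2) * eps^2" by simp
  hence h6': "a^2*(1+2*X3^2) < delta^2/2" using e by (simp only: mult_less_cancel_right) simp
  have "0 \<le> a^2*(1+2*X3^2)" by (intro mult_nonneg_nonneg) (auto intro: add_nonneg_nonneg)
  hence h6: "a^2*(1+2*X3^2) < delta^2" using h6' by linarith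
  have h7: "(a*X3 + lam*b)^2 \<le> lam*(a*X3+b)^2 + (1-lam)*(a*X3)^2"
  proof -
    have "lam*(a*X3+b)^2 + (1-lam)*(a*X3)^2 - (a*X3 + lam*b)^2 = lam*(1-lam)*b^2"
      by (simp add: power2_eq_square algebra_simps)
    moreover have "0 \<le> lam*(1-lam)*b^2" using lam by simp
    ultimately show ?thesis by simp
  qed
  have "a^2 + 2*(a*X3 + lam*b)^2 \<le> lam * Y + (1-lam) * (a^2*(1+2*X3^2))"
  proof -
    have "lam * Y + (1-lam) * (a^2*(1+2*X3^2)) = a^2 + 2*(lam*(a*X3+b)^2 + (1-lam)*(a*X3)^2)"
      unfolding Y_def by (simp add: power2_eq_square algebra_simps)
    thus ?thesis using h7 by simp
  qed
  also have "\<dots> < lam * delta^2 + (1-lam) * delta^2"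
  proof -
    have "lam * Y < lam * delta^2" using lam h4 by simp
    moreover have "(1-lam) * (a^2*(1+2*X3^2)) < (1-lam) * delta^2"
      using lam h6 by (intro mult_strict_left_mono) auto
    ultimately show ?thesis by simp
  qed
  also have "\<dots> = delta^2" by (simp add: algebra_simps)
  finally show ?thesis .
qed

lemma norm_sq3: "(norm (x::real^3))^2 = x$1^2 + x$2^2 + x$3^2"
proof -
  have "(norm x)^2 = inner x x" by (rule power2_norm_eq_inner)
  also have "\<dots> = (\<Sum>i\<in>UNIV. x$i * x$i)" unfolding inner_vec_def inner_real_def by (rule refl)
  also have "\<dots> = x$1^2 + x$2^2 + x$3^2" by (simp add: sum_3 power2_eq_square)
  finally show ?thesis .
qed

lemma normE:
  assumes "mink x0 x0 = 1" "q \<in> S1" "mink x0 q = 0"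
  shows "(norm (a *\<^sub>R x0 + b *\<^sub>R q))^2 = a^2 + 2*(a*x0$3+b)^2"
proof -
  have c: "x0$1^2 + x0$2^2 = 1 + x0$3^2" "q$1^2 + q$2^2 = 1" "q$3 = 1" "x0$1*q$1 + x0$2*q$2 = x0$3"
    using assms by (auto simp: mink_def S1_def power2_eq_square algebra_simps)
  have "(norm (a *\<^sub>R x0 + b *\<^sub>R q))^2 = a^2*(x0$1^2 + x0$2^2 + x0$3^2) + 2*a*b*(x0$1*q$1 + x0$2*q$2 + x0$3*q$3)
     + b^2*(q$1^2 + q$2^2 + q$3^2)"
    unfolding norm_sq3 by (simp add: power2_eq_square algebra_simps)
  also have "\<dots> = a^2*(1 + 2*x0$3^2) + 2*a*b*(2*x0$3) + b^2*2" using c by simp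
  also have "\<dots> = a^2 + 2*(a*x0$3+b)^2" by (simp add: power2_eq_square algebra_simps)
  finally show ?thesis .
qed




lemma nondeg:
  assumes D: "D3 v1 v2 v3 \<noteq> 0" and o: "mink v1 v1 = 0" "mink v1 v2 = 0" "mink v1 v3 = 0"
  shows "v1 = 0"
proof -
  define w :: "real^3" where "w = vector [v1$1, v1$2, - v1$3]"
  let ?D = "D3 v1 v2 v3"
  have "?D *\<^sub>R w = D3 w v2 v3 *\<^sub>R v1 + D3 v1 w v3 *\<^sub>R v2 + D3 v1 v2 w *\<^sub>R v3" by (rule cramer)
  hence "mink v1 (?D *\<^sub>R w) = D3 w v2 v3 * mink v1 v1 + D3 v1 w v3 * mink v1 v2 + D3 v1 v2 w * mink v1 v3"
    by (simp only: mink_lin3)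
  hence "?D * mink v1 w = 0" using o by (simp add: mink_scale2)
  hence "mink v1 w = 0" using D by simp
  hence "v1$1^2 + v1$2^2 + v1$3^2 = 0" by (simp add: w_def mink_def power2_eq_square)
  hence "v1$1 = 0 \<and> v1$2 = 0 \<and> v1$3 = 0" by (simp add: add_nonneg_eq_0_iff)
  thus "v1 = 0" by (simp add: vec3_eq_iff)
qed

lemma S1_ne0: "z \<in> S1 \<Longrightarrow> z \<noteq> 0"
  by (auto simp: S1_def)

lemma S1_null: "z \<in> S1 \<Longrightarrow> mink z z = 0"
  by (auto simp: S1_def mink_def power2_eq_square)

lemma S1_mink_ne:
  assumes "p \<in> S1" "q \<in> S1" "p \<noteq> q"
  shows "mink p q \<noteq> 0"
proof
  assume h: "mink p q = 0"
  have c: "p$1^2 + p$2^2 = 1" "q$1^2 + q$2^2 = 1" "p$3 = 1" "q$3 = 1" using assms by (auto simp: S1_def)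
  hence "p$1*q$1 + p$2*q$2 = 1" using h by (simp add: mink_def)
  hence "(p$1 - q$1)^2 + (p$2 - q$2)^2 = 0" using c
    by (simp add: power2_eq_square algebra_simps)
  hence "p$1 = q$1" "p$2 = q$2" by (simp_all add: sum_power2_eq_zero_iff)
  hence "p = q" using c by (simp add: vec3_eq_iff)
  thus False using assms by simp
qed

lemma not_timelike:
  assumes "p \<in> S1" "mink u p = 0" shows "\<not> mink u u < 0"
proof
  assume h: "mink u u < 0"
  have c: "p$1^2 + p$2^2 = 1" "p$3 = 1" using assms by (auto simp: S1_def)
  have e: "u$1*p$1 + u$2*p$2 = u$3" using assms(2) c by (simp add: mink_def)
  have "(u$1*p$1 + u$2*p$2)^2 \<le> (u$1^2 + u$2^2)*(p$1^2 + p$2^2)" by (rule cs2)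
  hence "(u$3)^2 \<le> u$1^2 + u$2^2" using e c by simp
  moreover have "u$1^2 + u$2^2 < (u$3)^2" using h by (simp add: mink_def power2_eq_square)
  ultimately show False by simp
qed


lemma D3_lin3: "D3 p q (c *\<^sub>R u) = c * D3 p q u"
  by (simp add: D3_formula algebra_simps)

lemma D3_cyc: "D3 p q u = D3 u p q"
  by (simp add: D3_formula algebra_simps)

lemma D3_rep: "D3 q q x = 0"
  by (simp add: D3_formula algebra_simps)

lemma D3_swap: "D3 q p x = - D3 p q x"
  by (simp add: D3_formula algebra_simps)

lemma mink_quad: "mink (b *\<^sub>R p + c *\<^sub>R q) (b *\<^sub>R p + c *\<^sub>R q) = b*b*mink p p + 2*b*c*mink p q + c*c*mink q q"
  by (simp add: mink_def algebra_simps)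

lemma mink_scale1: "mink (a *\<^sub>R x) u = a * mink x u"
  by (simp add: mink_def algebra_simps)

lemma S1_scale_eq:
  assumes "z \<in> S1" "p \<in> S1" "z = c *\<^sub>R p" shows "z = p"
proof -
  have "z$3 = 1" "p$3 = 1" using assms(1,2) by (auto simp: S1_def)
  hence "c = 1" using assms(3) by simp
  thus ?thesis using assms(3) by simp
qed

theorem mainTheorem3:
  fixes \<epsilon> \<delta> :: real and g :: "real^3^3"
  assumes "\<epsilon> > 0" and "g \<in> SO0_21" and "eps_hyperbolic \<epsilon> g" and "\<delta> > 0"
  shows "ball 0 (\<delta> * \<epsilon> / 4) \<inter> Ewu g \<subseteq> (\<lambda>x. g *v x) ` ball 0 \<delta>"
proof -
  note G = assms(2)
  have H: "hyperbolic g" and ES: "eps_spacelike \<epsilon> (xzero g)" using assms(3) by (auto simp: eps_hyperbolic_def)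
  obtain lam p q u where lam: "0 < lam" "lam < 1" and pS: "p \<in> S1" and qS: "q \<in> S1"
    and ep: "g *v p = lam *\<^sub>R p" and eq: "g *v q = (1/lam) *\<^sub>R q" and eu: "g *v u = u" and u0: "u \<noteq> 0"
    using hyp_structure[OF H] by blast
  define m where "m = 1/lam"
  have m1: "m > 1" using lam by (simp add: m_def)
  have lm: "lam * m = 1" using lam by (simp add: m_def)
  have eq': "g *v q = m *\<^sub>R q" using eq m_def by simp
  have eu': "g *v u = 1 *\<^sub>R u" using eu by simp
  have d: "1 \<noteq> lam" "1 \<noteq> m" "lam \<noteq> m" using lam m1 by auto
  have p0: "p \<noteq> 0" and q0: "q \<noteq> 0" using pS qS S1_ne0 by auto
  note cls = eig_class[OF eu' ep eq' d u0 p0 q0]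
  have Dupq: "D3 u p q \<noteq> 0" using eig3_D3[OF eu' ep eq' d u0 p0 q0] .
  have pq: "p \<noteq> q"
  proof
    assume pq: "p = q"
    have "lam *\<^sub>R p = g *v p" using ep by simp
    also have "\<dots> = m *\<^sub>R p" using eq' pq by simp
    finally have "lam *\<^sub>R p = m *\<^sub>R p" .
    hence "lam = m" using p0 by auto
    thus False using d by simp
  qed
  have mpq: "mink p q \<noteq> 0" using S1_mink_ne[OF pS qS pq] .
  have mup: "mink u p = 0" using eig_orth[OF G eu' ep] d by simp
  have muq: "mink u q = 0" using eig_orth[OF G eu' eq'] d by simp
  have mpp: "mink p p = 0" and mqq: "mink q q = 0" using S1_null pS qS by auto
  have muu: "mink u u > 0"
  proof -
    have "mink u u \<noteq> 0"
    proof
      assume "mink u u = 0"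
      hence "u = 0" using nondeg[OF Dupq _ mup muq] by simp
      thus False using u0 by simp
    qed
    moreover have "\<not> mink u u < 0" using not_timelike[OF pS mup] .
    ultimately show ?thesis by simp
  qed
  define s where "s = sqrt (mink u u)"
  have s0: "s > 0" using muu by (simp add: s_def)
  have ss: "s * s = mink u u" using muu by (simp add: s_def)
  have Dpqu: "D3 p q u \<noteq> 0" using Dupq D3_cyc by simp
  define c0 where "c0 = (if D3 p q u > 0 then 1/s else -1/s)"
  define x0 where "x0 = c0 *\<^sub>R u"
  have c0sq: "c0 * c0 * mink u u = 1"
  proof -
    have "c0 * c0 = 1/(s * s)" by (simp add: c0_def)
    thus ?thesis using ss muu by simp
  qed
  have Dx0: "D3 p q x0 > 0"
  proof -
    have "D3 p q x0 = c0 * D3 p q u" by (simp add: x0_def D3_lin3)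
    thus ?thesis using s0 Dpqu by (auto simp: c0_def divide_neg_pos)
  qed
  have gx0: "g *v x0 = x0" by (simp add: x0_def eu matrix_vector_mult_scaleR)
  have mx0: "mink x0 x0 = 1"
    using c0sq by (simp add: x0_def mink_scale1 mink_scale2)
  have mpx0: "mink p x0 = 0" and mqx0: "mink q x0 = 0" and mx0q: "mink x0 q = 0"
    using mup muq by (simp_all add: x0_def mink_scale1 mink_scale2 mink_sym[of p] mink_sym[of q])
  have xm: "xminus g = p"
    unfolding xminus_def
  proof (rule the_equality)
    show "p \<in> S1 \<and> (\<exists>l<1. g *v p = l *\<^sub>R p)" using pS lam ep by blast
  next
    fix z assume z: "z \<in> S1 \<and> (\<exists>l<1. g *v z = l *\<^sub>R z)"
    then obtain l where l: "l < 1" "g *v z = l *\<^sub>R z" by blast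
    from cls[OF S1_ne0 l(2)] z have "\<exists>c. z = c *\<^sub>R p" using l m1 by auto
    then obtain c where "z = c *\<^sub>R p" by blast
    thus "z = p" using S1_scale_eq z pS by blast
  qed
  have xp: "xplus g = q"
    unfolding xplus_def
  proof (rule the_equality)
    show "q \<in> S1 \<and> (\<exists>l>1. g *v q = l *\<^sub>R q)" using qS m1 eq' by blast
  next
    fix z assume z: "z \<in> S1 \<and> (\<exists>l>1. g *v z = l *\<^sub>R z)"
    then obtain l where l: "l > 1" "g *v z = l *\<^sub>R z" by blast
    from cls[OF S1_ne0 l(2)] z have "\<exists>c. z = c *\<^sub>R q" using l lam by auto
    then obtain c where "z = c *\<^sub>R q" by blast
    thus "z = q" using S1_scale_eq z qS by blast
  qed
  have xz: "xzero g = x0"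
    unfolding xzero_def xm xp pos_oriented_def
  proof (rule the_equality)
    show "g *v x0 = x0 \<and> mink x0 x0 = 1 \<and> det (vector [p, q, x0] :: real^3^3) > 0"
      using gx0 mx0 Dx0 by (simp add: D3_def)
  next
    fix x assume x: "g *v x = x \<and> mink x x = 1 \<and> det (vector [p, q, x] :: real^3^3) > 0"
    have x0': "x \<noteq> 0" using x by (auto simp: mink_def)
    have "g *v x = 1 *\<^sub>R x" using x by simp
    from cls[OF x0' this] d obtain c where c: "x = c *\<^sub>R u" by auto
    have "c * c * mink u u = 1" using x c by (simp add: mink_scale1 mink_scale2)
    hence "c * c * mink u u = c0 * c0 * mink u u" using c0sq by simp
    hence "c * c = c0 * c0" using muu by (simp only: mult_right_cancel)
    hence cc: "c = c0 \<or> c = - c0" by (simp add: square_eq_iff)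
    have "D3 p q x > 0" using x by (simp add: D3_def)
    hence "c * D3 p q u > 0" using c by (simp add: D3_lin3)
    moreover have "c0 * D3 p q u > 0" using Dx0 by (simp add: x0_def D3_lin3)
    ultimately have "c = c0" using cc by auto
    thus "x = x0" using c by (simp add: x0_def)
  qed
  have perp: "z = p \<or> z = q" if z: "z \<in> S1" "mink z x0 = 0" for z
  proof -
    let ?D = "D3 u p q"
    define a where "a = D3 z p q / ?D"
    define b where "b = D3 u z q / ?D"
    define c where "c = D3 u p z / ?D"
    have zz: "z = a *\<^sub>R u + b *\<^sub>R p + c *\<^sub>R q"
    proof -
      have "z = (1/?D) *\<^sub>R (?D *\<^sub>R z)" using Dupq by simp
      also have "\<dots> = a *\<^sub>R u + b *\<^sub>R p + c *\<^sub>R q"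
        unfolding cramer[of u p q z] a_def b_def c_def by (simp add: scaleR_add_right)
      finally show ?thesis .
    qed
    have "mink u z = a * mink u u + b * mink u p + c * mink u q"
      by (subst zz) (simp only: mink_lin3)
    hence "mink u z = a * mink u u" using mup muq by simp
    moreover have "mink u z = 0" using z(2) s0 by (simp add: x0_def mink_scale2 mink_sym[of z] mink_scale1 c0_def split: if_splits)
    ultimately have a0: "a = 0" using muu by simp
    hence zz': "z = b *\<^sub>R p + c *\<^sub>R q" using zz by simp
    have "mink z z = 0" using S1_null z(1) .
    hence "2*b*c*mink p q = 0" using mpp mqq by (simp add: zz' mink_quad[of b p c q])
    hence bc: "b = 0 \<or> c = 0" using mpq by simp
    have "z$3 = 1" "p$3 = 1" "q$3 = 1" using z(1) pS qS by (auto simp: S1_def)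
    hence "b + c = 1" using zz' by simp
    thus ?thesis using bc zz' by auto
  qed
  have vm: "vminus x0 = p"
    unfolding vminus_def pos_oriented_def
  proof (rule the_equality)
    show "p \<in> S1 \<and> mink p x0 = 0 \<and> (\<exists>y. y \<in> S1 \<and> mink y x0 = 0 \<and> det (vector [p, y, x0] :: real^3^3) > 0)"
      using pS qS mpx0 mqx0 Dx0 by (auto simp: D3_def)
  next
    fix x assume x: "x \<in> S1 \<and> mink x x0 = 0 \<and> (\<exists>y. y \<in> S1 \<and> mink y x0 = 0 \<and> det (vector [x, y, x0] :: real^3^3) > 0)"
    then obtain y where y: "y \<in> S1" "mink y x0 = 0" "D3 x y x0 > 0" by (auto simp: D3_def)
    have "x = p \<or> x = q" using perp x by blast
    moreover have "y = p \<or> y = q" using perp y by blast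
    ultimately show "x = p" using y(3) Dx0 D3_rep[of x x0] D3_swap[of q p x0] by auto
  qed
  have vp: "vplus x0 = q"
    unfolding vplus_def vm pos_oriented_def
  proof (rule the_equality)
    show "q \<in> S1 \<and> mink q x0 = 0 \<and> det (vector [p, q, x0] :: real^3^3) > 0"
      using qS mqx0 Dx0 by (simp add: D3_def)
  next
    fix y assume y: "y \<in> S1 \<and> mink y x0 = 0 \<and> det (vector [p, y, x0] :: real^3^3) > 0"
    hence "D3 p y x0 > 0" by (simp add: D3_def)
    moreover have "y = p \<or> y = q" using perp y by blast
    ultimately show "y = q" using D3_rep[of p x0] by auto
  qed
  have rho: "\<epsilon> \<le> dist q p" using ES by (simp add: eps_spacelike_def xz vm vp)
  have chord: "(dist q p)^2 * (1 + (x0$3)^2) \<le> 4"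
  proof -
    have c: "x0$1^2 + x0$2^2 = 1 + x0$3^2" "x0$1*p$1 + x0$2*p$2 = x0$3" "x0$1*q$1 + x0$2*q$2 = x0$3"
      "p$1^2 + p$2^2 = 1" "q$1^2 + q$2^2 = 1" "p$3 = 1" "q$3 = 1"
      using mx0 mpx0 mqx0 pS qS by (auto simp: mink_def S1_def power2_eq_square algebra_simps)
    have "(dist q p)^2 = (q$1 - p$1)^2 + (q$2 - p$2)^2"
      using c by (simp add: dist_norm norm_sq3)
    thus ?thesis using chord_ineq[OF c(1-5)] by simp
  qed
  show ?thesis
  proof
    fix y assume y: "y \<in> ball 0 (\<delta> * \<epsilon> / 4) \<inter> Ewu g"
    have "y \<in> span {x0, q}" using y by (simp add: Ewu_def xz xp)
    then obtain a b where yab: "y = a *\<^sub>R x0 + b *\<^sub>R q" using span2 by blast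
    define w where "w = a *\<^sub>R x0 + (lam*b) *\<^sub>R q"
    have gw: "g *v w = y"
      using gx0 eq' lm by (simp add: w_def yab matrix_vector_mult_scaleR algebra_simps)
    have ny: "norm y < \<delta> * \<epsilon> / 4" using y by simp
    have "(norm y)^2 < (\<delta> * \<epsilon> / 4)^2" using ny by (intro power_strict_mono) auto
    hence Y: "a^2 + 2*(a*x0$3 + b)^2 < (\<delta> * \<epsilon> / 4)^2" using normE[OF mx0 qS mx0q, of a b] yab by simp
    have "(norm w)^2 = a^2 + 2*(a*x0$3 + lam*b)^2" using normE[OF mx0 qS mx0q, of a "lam*b"] by (simp add: w_def)
    also have "\<dots> < \<delta>^2"
      using final_ineq[OF lam assms(1) rho assms(4) chord Y] .
    finally have "norm w < \<delta>" using assms(4) by (simp add: power_less_imp_less_base)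
    hence "w \<in> ball 0 \<delta>" by simp
    thus "y \<in> (\<lambda>x. g *v x) ` ball 0 \<delta>" using gw by blast
  qed
qed


end
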